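(* Let $\Lambda$ be a row-finite $k$-graph with no sources and let $\{t_\lambda\}_{\lambda\in\Lambda}$ be a representation of $C^*(\Lambda)$ with associated projection valued measure $P$. (a) If $\omega,\gamma\in\Lambda^\infty$ satisfy $\mathrm{Orbit}(\omega)=\mathrm{Orbit}(\gamma)$, then $P(\{\omega\})=0$ if and only if $P(\{\gamma\})=0$. (b) If the representation is purely atomic and $\Omega=\mathrm{supp}(P):=\{\omega\in\Lambda^\infty:P(\{\omega\})\neq0\}$, then $\Omega$ is a disjoint union of orbits, $\Omega=\bigsqcup_{\omega\in R}\mathrm{Orbit}(\omega)$ for a set $R\subseteq\Omega$ of orbit representatives, and $\bigoplus_{\omega\in R}P(\mathrm{Orbit}(\omega))=\mathrm{Id}_{\mathcal H}$.
   Context: A $k$-graph ($k\ge 1$) is a countable small category $\Lambda$ with a functor $d:\Lambda\to\mathbb N^k$ satisfying the factorization property: whenever $d(\lambda)=m+n$ there are unique $\mu,\nu$ with $\lambda=\mu\nu$, $d(\mu)=m$, $d(\nu)=n$. $\Lambda^0$ is the vertex set, $r,s$ range and source, $\Lambda^n=d^{-1}(n)$, $v\Lambda^n=\{\lambda\in\Lambda^n:r(\lambda)=v\}$; row-finite means each $v\Lambda^n$ finite, no sources means each $v\Lambda^n$ nonempty. $\Omega_k$ is the $k$-graph with objects $\mathbb N^k$, morphisms $(p,q)$ with $p\le q$, $d(p,q)=q-p$. An infinite path is a degree-preserving functor $x:\Omega_k\to\Lambda$; $\Lambda^\infty$ is the set of these. Shift: $\sigma^m(x)(p,q)=x(p+m,q+m)$.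 $\mathrm{Orbit}(\omega)=\{\gamma\in\Lambda^\infty:\sigma^m(\gamma)=\sigma^\ell(\omega)\text{ for some }m,\ell\in\mathbb N^k\}$. Cylinder sets $Z(\lambda)=\{x:x(0,d(\lambda))=\lambda\}$ generate the Borel $\sigma$-algebra. A representation of $C^*(\Lambda)$ is a family of partial isometries $\{t_\lambda\}$ on a Hilbert space $\mathcal H$ satisfying (CK1) $\{t_v\}_{v\in\Lambda^0}$ mutually orthogonal projections, (CK2) $t_\lambda t_\eta=t_{\lambda\eta}$ if $s(\lambda)=r(\eta)$, (CK3) $t_\lambda^*t_\lambda=t_{s(\lambda)}$, (CK4) $t_v=\sum_{\lambda\in v\Lambda^n}t_\lambda t_\lambda^*$. Its projection valued measure $P$ is the one on Borel sets of $\Lambda^\infty$ with $P(Z(\lambda))=t_\lambda t_\lambda^*$. The representation is purely atomic if there is a Borel $\Omega\subseteq\Lambda^\infty$ with $P(\Lambda^\infty\setminus\Omega)=0$, $P(\{\omega\})\neq0$ for $\omega\in\Omega$, and $\sum_{\omega\in\Omega}P(\{\omega\})=\mathrm{Id}$ strongly. *)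

theory Defs
  imports "HOL-Analysis.Analysis" "HOL-Library.Function_Algebras"
begin

text \<open>HOL-Analysis has no complex inner product spaces, so we introduce the class of
complex Hilbert spaces: a real Banach space with a compatible complex scalar multiplication
and a complex inner product inducing the norm.\<close>

class chilbert_space = banach +
  fixes cscale :: "complex \<Rightarrow> 'a \<Rightarrow> 'a"
  fixes cinner :: "'a \<Rightarrow> 'a \<Rightarrow> complex"
  assumes cscale_add_right: "cscale a (x + y) = cscale a x + cscale a y"
    and cscale_add_left: "cscale (a + b) x = cscale a x + cscale b x"
    and cscale_cscale: "cscale a (cscale b x) = cscale (a * b) x"
    and cscale_one: "cscale 1 x = x"
    and scaleR_cscale: "scaleR r x = cscale (complex_of_real r) x"
    and cinner_commute: "cinner x y = cnj (cinner y x)"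
    and cinner_add_left: "cinner (x + y) z = cinner x z + cinner y z"
    and cinner_cscale_left: "cinner (cscale c x) y = cnj c * cinner x y"
    and cinner_self: "cinner x x = complex_of_real ((norm x)\<^sup>2)"

definition bounded_clinear :: "('h::chilbert_space \<Rightarrow> 'h) \<Rightarrow> bool" where
  "bounded_clinear T \<longleftrightarrow> (\<forall>x y. T (x + y) = T x + T y) \<and> (\<forall>c x. T (cscale c x) = cscale c (T x))
     \<and> (\<exists>K. \<forall>x. norm (T x) \<le> K * norm x)"

text \<open>The adjoint (exists and is unique for bounded operators).\<close>
definition adj :: "('h::chilbert_space \<Rightarrow> 'h) \<Rightarrow> 'h \<Rightarrow> 'h" where
  "adj T = (SOME S. \<forall>x y. cinner (T x) y = cinner x (S y))"

definition is_proj :: "('h::chilbert_space \<Rightarrow> 'h) \<Rightarrow> bool" where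
  "is_proj T \<longleftrightarrow> bounded_clinear T \<and> T \<circ> T = T \<and> (\<forall>x y. cinner (T x) y = cinner x (T y))"

text \<open>Degrees live in \<open>\<nat>^k\<close>, modelled as \<open>'k \<Rightarrow> nat\<close> for a finite index type \<open>'k\<close>
(so \<open>k = CARD('k) \<ge> 1\<close>), with pointwise order and addition.
Objects are identified with their identity morphisms.\<close>

record ('a, 'k) kgraph =
  Mor :: "'a set"
  rg  :: "'a \<Rightarrow> 'a"
  sr  :: "'a \<Rightarrow> 'a"
  cmp :: "'a \<Rightarrow> 'a \<Rightarrow> 'a"
  dg  :: "'a \<Rightarrow> 'k \<Rightarrow> nat"

definition verts :: "('a, 'k) kgraph \<Rightarrow> 'a set" where
  "verts L = rg L ` Mor L"

definition is_kgraph :: "('a, 'k::finite) kgraph \<Rightarrow> bool" where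
  "is_kgraph L \<longleftrightarrow>
     countable (Mor L) \<and>
     (\<forall>l\<in>Mor L. rg L l \<in> Mor L \<and> sr L l \<in> Mor L \<and>
        rg L (rg L l) = rg L l \<and> sr L (rg L l) = rg L l \<and>
        rg L (sr L l) = sr L l \<and> sr L (sr L l) = sr L l \<and>
        cmp L (rg L l) l = l \<and> cmp L l (sr L l) = l) \<and>
     (\<forall>l\<in>Mor L. \<forall>m\<in>Mor L. sr L l = rg L m \<longrightarrow>
        cmp L l m \<in> Mor L \<and> rg L (cmp L l m) = rg L l \<and> sr L (cmp L l m) = sr L m \<and>
        dg L (cmp L l m) = dg L l + dg L m) \<and>
     (\<forall>l\<in>Mor L. \<forall>m\<in>Mor L. \<forall>n\<in>Mor L. sr L l = rg L m \<and> sr L m = rg L n \<longrightarrow>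
        cmp L (cmp L l m) n = cmp L l (cmp L m n)) \<and>
     (\<forall>l\<in>Mor L. \<forall>m n. dg L l = m + n \<longrightarrow>
        (\<exists>!p. fst p \<in> Mor L \<and> snd p \<in> Mor L \<and> sr L (fst p) = rg L (snd p) \<and>
              cmp L (fst p) (snd p) = l \<and> dg L (fst p) = m \<and> dg L (snd p) = n))"

definition vpaths :: "('a, 'k) kgraph \<Rightarrow> 'a \<Rightarrow> ('k \<Rightarrow> nat) \<Rightarrow> 'a set" where
  "vpaths L v n = {l \<in> Mor L. rg L l = v \<and> dg L l = n}"

definition row_finite :: "('a, 'k) kgraph \<Rightarrow> bool" where
  "row_finite L \<longleftrightarrow> (\<forall>v\<in>verts L. \<forall>n. finite (vpaths L v n))"

definition no_sources :: "('a, 'k) kgraph \<Rightarrow> bool" where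
  "no_sources L \<longleftrightarrow> (\<forall>v\<in>verts L. \<forall>n. vpaths L v n \<noteq> {})"

text \<open>An infinite path is a degree preserving functor \<open>\<Omega>_k \<rightarrow> \<Lambda>\<close>, given on the morphisms
\<open>(p,q)\<close>, \<open>p \<le> q\<close>, of \<open>\<Omega>_k\<close>; it is extended by \<open>undefined\<close> off this set so that paths are
determined by their values on \<open>\<Omega>_k\<close>.\<close>

type_synonym ('a, 'k) ipath = "('k \<Rightarrow> nat) \<times> ('k \<Rightarrow> nat) \<Rightarrow> 'a"

definition infpaths :: "('a, 'k::finite) kgraph \<Rightarrow> ('a, 'k) ipath set" where
  "infpaths L = {x.
     (\<forall>p q. p \<le> q \<longrightarrow> x (p, q) \<in> Mor L \<and> dg L (x (p, q)) = q - p \<and>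
        rg L (x (p, q)) = x (p, p) \<and> sr L (x (p, q)) = x (q, q)) \<and>
     (\<forall>p. x (p, p) \<in> verts L) \<and>
     (\<forall>p q n. p \<le> q \<and> q \<le> n \<longrightarrow> cmp L (x (p, q)) (x (q, n)) = x (p, n)) \<and>
     (\<forall>p q. \<not> p \<le> q \<longrightarrow> x (p, q) = undefined)}"

definition shift :: "('k \<Rightarrow> nat) \<Rightarrow> ('a, 'k) ipath \<Rightarrow> ('a, 'k) ipath" where
  "shift m x = (\<lambda>(p, q). x (p + m, q + m))"

definition orbit :: "('a, 'k::finite) kgraph \<Rightarrow> ('a, 'k) ipath \<Rightarrow> ('a, 'k) ipath set" where
  "orbit L w = {g \<in> infpaths L. \<exists>m l. shift m g = shift l w}"

definition cyl :: "('a, 'k::finite) kgraph \<Rightarrow> 'a \<Rightarrow> ('a, 'k) ipath set" where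
  "cyl L l = {x \<in> infpaths L. x (0, dg L l) = l}"

definition borel_paths :: "('a, 'k::finite) kgraph \<Rightarrow> ('a, 'k) ipath set set" where
  "borel_paths L = sigma_sets (infpaths L) (cyl L ` Mor L)"

definition ck_rep :: "('a, 'k::finite) kgraph \<Rightarrow> ('a \<Rightarrow> 'h::chilbert_space \<Rightarrow> 'h) \<Rightarrow> bool" where
  "ck_rep L t \<longleftrightarrow>
     (\<forall>l\<in>Mor L. bounded_clinear (t l)) \<and>
     (\<forall>v\<in>verts L. is_proj (t v)) \<and>
     (\<forall>v\<in>verts L. \<forall>w\<in>verts L. v \<noteq> w \<longrightarrow> t v \<circ> t w = (\<lambda>_. 0)) \<and>
     (\<forall>l\<in>Mor L. \<forall>e\<in>Mor L. sr L l = rg L e \<longrightarrow> t l \<circ> t e = t (cmp L l e)) \<and>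
     (\<forall>l\<in>Mor L. adj (t l) \<circ> t l = t (sr L l)) \<and>
     (\<forall>v\<in>verts L. \<forall>n h. t v h = (\<Sum>l\<in>vpaths L v n. t l (adj (t l) h)))"

definition is_pvm :: "('a, 'k::finite) kgraph \<Rightarrow> (('a, 'k) ipath set \<Rightarrow> 'h::chilbert_space \<Rightarrow> 'h) \<Rightarrow> bool" where
  "is_pvm L P \<longleftrightarrow>
     (\<forall>E\<in>borel_paths L. is_proj (P E)) \<and> P {} = (\<lambda>_. 0) \<and>
     (\<forall>A :: nat \<Rightarrow> ('a, 'k) ipath set. range A \<subseteq> borel_paths L \<and> disjoint_family A \<longrightarrow>
        (\<forall>h. (\<lambda>i. P (A i) h) sums P (\<Union>i. A i) h))"

definition rep_pvm :: "('a, 'k::finite) kgraph \<Rightarrow> ('a \<Rightarrow> 'h::chilbert_space \<Rightarrow> 'h)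
    \<Rightarrow> (('a, 'k) ipath set \<Rightarrow> 'h \<Rightarrow> 'h) \<Rightarrow> bool" where
  "rep_pvm L t P \<longleftrightarrow> is_pvm L P \<and> (\<forall>l\<in>Mor L. P (cyl L l) = t l \<circ> adj (t l))"

definition purely_atomic :: "('a, 'k::finite) kgraph \<Rightarrow> (('a, 'k) ipath set \<Rightarrow> 'h::chilbert_space \<Rightarrow> 'h) \<Rightarrow> bool" where
  "purely_atomic L P \<longleftrightarrow> (\<exists>Om\<in>borel_paths L.
     P (infpaths L - Om) = (\<lambda>_. 0) \<and> (\<forall>w\<in>Om. P {w} \<noteq> (\<lambda>_. 0)) \<and>
     (\<forall>h. ((\<lambda>w. P {w} h) has_sum h) Om))"

definition pvm_supp :: "('a, 'k::finite) kgraph \<Rightarrow> (('a, 'k) ipath set \<Rightarrow> 'h::chilbert_space \<Rightarrow> 'h) \<Rightarrow> ('a, 'k) ipath set" where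
  "pvm_supp L P = {w \<in> infpaths L. P {w} \<noteq> (\<lambda>_. 0)}"

end

theory Submission
  imports Defs
begin


lemma kg_fact:
  assumes "is_kgraph L"
  shows "countable (Mor L)"
    and "\<And>l. l\<in>Mor L \<Longrightarrow> rg L l \<in> Mor L \<and> sr L l \<in> Mor L \<and>
        rg L (rg L l) = rg L l \<and> sr L (rg L l) = rg L l \<and>
        rg L (sr L l) = sr L l \<and> sr L (sr L l) = sr L l \<and>
        cmp L (rg L l) l = l \<and> cmp L l (sr L l) = l"
    and "\<And>l m. l\<in>Mor L \<Longrightarrow> m\<in>Mor L \<Longrightarrow> sr L l = rg L m \<Longrightarrow>
        cmp L l m \<in> Mor L \<and> rg L (cmp L l m) = rg L l \<and> sr L (cmp L l m) = sr L m \<and>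
        dg L (cmp L l m) = dg L l + dg L m"
    and "\<And>l m n. l\<in>Mor L \<Longrightarrow> dg L l = m + n \<Longrightarrow>
        (\<exists>!p. fst p \<in> Mor L \<and> snd p \<in> Mor L \<and> sr L (fst p) = rg L (snd p) \<and>
              cmp L (fst p) (snd p) = l \<and> dg L (fst p) = m \<and> dg L (snd p) = n)"
  using assms unfolding is_kgraph_def by blast+

lemma ip_fact:
  assumes "x \<in> infpaths L"
  shows "\<And>p q. p \<le> q \<Longrightarrow> x (p, q) \<in> Mor L \<and> dg L (x (p, q)) = q - p \<and>
        rg L (x (p, q)) = x (p, p) \<and> sr L (x (p, q)) = x (q, q)"
    and "\<And>p. x (p, p) \<in> verts L"
    and "\<And>p q n. p \<le> q \<Longrightarrow> q \<le> n \<Longrightarrow> cmp L (x (p, q)) (x (q, n)) = x (p, n)"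
    and "\<And>p q. \<not> p \<le> q \<Longrightarrow> x (p, q) = undefined"
  using assms unfolding infpaths_def by blast+

lemma deg_split:
  fixes a b c :: "'k \<Rightarrow> nat"
  assumes "a \<le> b" "b \<le> c"
  shows "c - a = (b - a) + (c - b)"
  using assms by (auto simp: le_fun_def fun_eq_iff)

lemma ip_split:
  assumes kg: "is_kgraph L" and x: "x \<in> infpaths L" and y: "y \<in> infpaths L"
    and ab: "a \<le> b" and bc: "b \<le> c" and eq: "x (a, c) = y (a, c)"
  shows "x (a, b) = y (a, b) \<and> x (b, c) = y (b, c)"
proof -
  have ac: "a \<le> c" using ab bc by (rule order_trans)
  have l: "x (a, c) \<in> Mor L" "dg L (x (a, c)) = (b - a) + (c - b)"
    using ip_fact(1)[OF x ac] deg_split[OF ab bc] by auto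
  from kg_fact(4)[OF kg l] obtain p where
    "\<And>p'. fst p' \<in> Mor L \<and> snd p' \<in> Mor L \<and> sr L (fst p') = rg L (snd p') \<and>
              cmp L (fst p') (snd p') = x (a, c) \<and> dg L (fst p') = b - a \<and> dg L (snd p') = c - b
         \<Longrightarrow> p' = p"
    by metis
  moreover have "(x (a,b), x (b,c)) = p"
    using ip_fact[OF x] ab bc by (intro calculation) auto
  moreover have "(y (a,b), y (b,c)) = p"
    using ip_fact[OF y] ab bc eq by (intro calculation) (auto simp: ip_fact(3)[OF x ab bc])
  ultimately show ?thesis by auto
qed

lemma ip_eqI:
  assumes kg: "is_kgraph L" and x: "x \<in> infpaths L" and y: "y \<in> infpaths L"
    and eq: "\<And>Q. \<exists>Q'. Q \<le> Q' \<and> x (0, Q') = y (0, Q')"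
  shows "x = y"
proof -
  have "x (p, q) = y (p, q)" for p q
  proof (cases "p \<le> q")
    case True
    obtain Q' where Q': "q \<le> Q'" "x (0, Q') = y (0, Q')" using eq by blast
    have z: "0 \<le> q" "0 \<le> p" by (simp_all add: le_fun_def)
    have "x (0, q) = y (0, q)" using ip_split[OF kg x y z(1) Q'] by blast
    then show "x (p, q) = y (p, q)" using ip_split[OF kg x y z(2) True] by blast
  next
    case False
    then show ?thesis using ip_fact(4)[OF x] ip_fact(4)[OF y] by simp
  qed
  then show ?thesis by (auto simp: fun_eq_iff)
qed

lemma shift_infpaths:
  fixes x :: "('a, 'k::finite) ipath"
  assumes x: "x \<in> infpaths L"
  shows "shift m x \<in> infpaths L"
proof -
  have a: "\<And>p q. p \<le> q \<Longrightarrow> p + m \<le> q + m" by (simp add: add_right_mono)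
  have b: "\<And>p q. \<not> p \<le> q \<Longrightarrow> \<not> p + m \<le> q + m" by (simp add: le_fun_def)
  have c: "\<And>p q :: 'k \<Rightarrow> nat. q + m - (p + m) = q - p" by (simp add: fun_eq_iff)
  show ?thesis unfolding infpaths_def shift_def
    using ip_fact[OF x] a b c by (auto simp: add_right_mono)
qed

lemma shift_0[simp]: "shift 0 x = x"
  by (simp add: shift_def)

lemma shift_shift: "shift a (shift b x) = shift (a + b) x"
  by (simp add: shift_def add.assoc add.commute add.left_commute)

lemma orbit_refl: "w \<in> infpaths L \<Longrightarrow> w \<in> orbit L w"
  unfolding orbit_def by (auto intro!: exI[of _ 0])

lemma orbit_sym: "g \<in> orbit L w \<Longrightarrow> w \<in> infpaths L \<Longrightarrow> w \<in> orbit L g"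
  unfolding orbit_def by (auto intro: sym)

lemma orbit_trans: assumes "g \<in> orbit L w" "u \<in> orbit L g" shows "u \<in> orbit L w"
proof -
  obtain m l where 1: "g \<in> infpaths L" "shift m g = shift l w" using assms(1) unfolding orbit_def by blast
  obtain m' l' where 2: "u \<in> infpaths L" "shift m' u = shift l' g" using assms(2) unfolding orbit_def by blast
  have "shift (m + m') u = shift (l' + l) w"
  proof -
    have "shift (m + m') u = shift m (shift m' u)" by (simp add: shift_shift)
    also have "\<dots> = shift (m + l') g" using 2 by (simp add: shift_shift)
    also have "\<dots> = shift l' (shift m g)" by (simp add: shift_shift add.commute)
    also have "\<dots> = shift (l' + l) w" using 1 by (simp add: shift_shift)
    finally show ?thesis .
  qed
  then show ?thesis using 2 unfolding orbit_def by blast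
qed

lemma orbit_eq: "g \<in> orbit L w \<Longrightarrow> w \<in> infpaths L \<Longrightarrow> orbit L g = orbit L w"
  using orbit_trans orbit_sym by blast

lemma orbit_sub: "orbit L w \<subseteq> infpaths L"
  unfolding orbit_def by blast

lemma shift_unique:
  assumes kg: "is_kgraph L" and g: "g \<in> infpaths L" and g': "g' \<in> infpaths L"
    and e1: "g (0, m) = g' (0, m)" and e2: "shift m g = shift m g'"
  shows "g = g'"
proof (rule ip_eqI[OF kg g g'])
  fix Q
  have le: "0 \<le> m" "m \<le> Q + m" "Q \<le> Q + m" by (simp_all add: le_fun_def)
  have "g (m, Q + m) = g' (m, Q + m)"
    using fun_cong[OF e2, of "(0, Q)"] by (simp add: shift_def)
  then have "g (0, Q + m) = g' (0, Q + m)"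
    using ip_fact(3)[OF g le(1,2)] ip_fact(3)[OF g' le(1,2)] e1 by metis
  then show "\<exists>Q'. Q \<le> Q' \<and> g (0, Q') = g' (0, Q')" using le(3) by blast
qed

lemma orbit_countable:
  fixes L :: "('a, 'k::finite) kgraph"
  assumes kg: "is_kgraph L"
  shows "countable (orbit L w)"
proof -
  let ?S = "\<lambda>(mu, m, l). {g \<in> infpaths L. g (0, m) = mu \<and> shift m g = shift l w}"
  have sub: "orbit L w \<subseteq> (\<Union>z\<in>Mor L \<times> UNIV \<times> UNIV. ?S z)"
  proof
    fix g assume "g \<in> orbit L w"
    then obtain m l where g: "g \<in> infpaths L" "shift m g = shift l w" unfolding orbit_def by blast
    have "g (0, m) \<in> Mor L" using ip_fact(1)[OF g(1), of 0 m] by (simp add: le_fun_def)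
    then show "g \<in> (\<Union>z\<in>Mor L \<times> UNIV \<times> UNIV. ?S z)" using g by blast
  qed
  have "countable (?S z)" for z
  proof -
    obtain mu m l where z: "z = (mu, m, l)" by (cases z) auto
    have ss: "\<And>a b. a \<in> ?S z \<Longrightarrow> b \<in> ?S z \<Longrightarrow> a = b" unfolding z
      using shift_unique[OF kg] by (clarsimp; metis)
    have "finite (?S z)"
    proof (cases "?S z = {}")
      case False
      then obtain a where "a \<in> ?S z" by blast
      then have "?S z \<subseteq> {a}" using ss by blast
      then show ?thesis using finite_subset by blast
    qed simp
    then show ?thesis by (rule countable_finite)
  qed
  moreover have "countable (Mor L \<times> (UNIV::('k \<Rightarrow> nat) set) \<times> (UNIV::('k \<Rightarrow> nat) set))"
    using kg_fact(1)[OF kg] by auto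
  ultimately have "countable (\<Union>z\<in>Mor L \<times> UNIV \<times> UNIV. ?S z)" by (intro countable_UN) auto
  then show ?thesis using sub countable_subset by blast
qed

lemma borel_sa: "sigma_algebra (infpaths L) (borel_paths L)"
  unfolding borel_paths_def by (rule sigma_algebra_sigma_sets) (auto simp: cyl_def)

lemma cyl_borel: "l \<in> Mor L \<Longrightarrow> cyl L l \<in> borel_paths L"
  unfolding borel_paths_def by (rule sigma_sets.Basic) auto

lemma borel_sub: "E \<in> borel_paths L \<Longrightarrow> E \<subseteq> infpaths L"
  unfolding borel_paths_def by (rule sigma_sets_into_sp) (auto simp: cyl_def)

lemma cyl_path:
  assumes x: "x \<in> infpaths L"
  shows "cyl L (x (0, q)) = {y \<in> infpaths L. y (0, q) = x (0, q)}"
proof -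
  have "dg L (x (0, q)) = q" using ip_fact(1)[OF x, of 0 q] by (simp add: le_fun_def)
  then show ?thesis unfolding cyl_def by simp
qed

lemma cyl_path_borel: "x \<in> infpaths L \<Longrightarrow> cyl L (x (0, q)) \<in> borel_paths L"
  using ip_fact(1)[of x L 0 q] by (intro cyl_borel) (simp add: le_fun_def)

lemma cyl_dec:
  assumes kg: "is_kgraph L" and x: "x \<in> infpaths L" and le: "q \<le> q'"
  shows "cyl L (x (0, q')) \<subseteq> cyl L (x (0, q))"
proof
  fix y assume "y \<in> cyl L (x (0, q'))"
  then have y: "y \<in> infpaths L" "y (0, q') = x (0, q')" using cyl_path[OF x] by auto
  have z: "0 \<le> q" by (simp add: le_fun_def)
  have "y (0, q) = x (0, q)" using ip_split[OF kg y(1) x z le y(2)] by (rule conjunct1)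
  then show "y \<in> cyl L (x (0, q))"
    using cyl_path[OF x] y(1) by blast
qed

lemma cyl_Inter:
  assumes kg: "is_kgraph L" and x: "x \<in> infpaths L"
  shows "(\<Inter>n. cyl L (x (0, (\<lambda>_. n) + c))) = {x}"
proof
  show "{x} \<subseteq> (\<Inter>n. cyl L (x (0, (\<lambda>_. n) + c)))" using cyl_path[OF x] x by auto
  show "(\<Inter>n. cyl L (x (0, (\<lambda>_. n) + c))) \<subseteq> {x}"
  proof
    fix y assume "y \<in> (\<Inter>n. cyl L (x (0, (\<lambda>_. n) + c)))"
    then have y: "y \<in> infpaths L" "\<And>n. y (0, (\<lambda>_. n) + c) = x (0, (\<lambda>_. n) + c)"
      using cyl_path[OF x] by auto
    have "y = x"
    proof (rule ip_eqI[OF kg y(1) x])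
      fix Q :: "'b \<Rightarrow> nat"
      have "Q \<le> (\<lambda>_. \<Sum>i\<in>UNIV. Q i) + c"
      proof -
        have "Q i \<le> sum Q UNIV" for i by (rule member_le_sum) auto
        then show ?thesis unfolding le_fun_def plus_fun_def using trans_le_add1 by blast
      qed
      then show "\<exists>Q'. Q \<le> Q' \<and> y (0, Q') = x (0, Q')" using y(2) by blast
    qed
    then show "y \<in> {x}" by simp
  qed
qed

lemma singleton_borel:
  assumes kg: "is_kgraph L" and x: "x \<in> infpaths L"
  shows "{x} \<in> borel_paths L"
proof -
  have "(\<Inter>n. cyl L (x (0, (\<lambda>_. n) + 0))) \<in> borel_paths L"
    by (rule sigma_algebra.countable_INT[OF borel_sa]) (auto intro: cyl_path_borel[OF x])
  then show ?thesis using cyl_Inter[OF kg x, of 0] by metis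
qed

lemma countable_borel:
  assumes kg: "is_kgraph L" and A: "countable A" "A \<subseteq> infpaths L"
  shows "A \<in> borel_paths L"
proof -
  have "(\<Union>x\<in>A. {x}) \<in> borel_paths L"
    using singleton_borel[OF kg] A by (intro sigma_algebra.countable_UN'[OF borel_sa]) auto
  then show ?thesis by simp
qed

lemma bcl_linear:
  assumes "bounded_clinear T"
  shows "bounded_linear T"
proof -
  have add: "\<And>x y. T (x + y) = T x + T y" and sc: "\<And>c x. T (cscale c x) = cscale c (T x)"
    and K: "\<exists>K. \<forall>x. norm (T x) \<le> K * norm x"
    using assms unfolding bounded_clinear_def by blast+
  obtain K where K: "\<And>x. norm (T x) \<le> K * norm x" using K by blast
  show ?thesis
  proof (rule bounded_linear_intro)
    show "T (x + y) = T x + T y" for x y by (rule add)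
    show "T (scaleR r x) = scaleR r (T x)" for r x by (simp add: scaleR_cscale sc)
    show "norm (T x) \<le> norm x * K" for x using K[of x] by (simp add: mult.commute)
  qed
qed

lemma proj_linear: "is_proj T \<Longrightarrow> bounded_linear T"
  unfolding is_proj_def using bcl_linear by blast

lemma proj_idem: "is_proj T \<Longrightarrow> T (T x) = T x"
  unfolding is_proj_def by (metis comp_apply)

lemma proj_orth:
  assumes E: "is_proj E" and F: "is_proj F" and G: "is_proj G"
    and sum: "\<And>h. G h = E h + F h"
  shows "E (F h) = 0"
proof -
  interpret e: bounded_linear E using proj_linear[OF E] .
  interpret f: bounded_linear F using proj_linear[OF F] .
  have star: "E (F x) + F (E x) = 0" for x
  proof -
    have "G (G x) = G x" by (rule proj_idem[OF G])
    then have "E (E x + F x) + F (E x + F x) = E x + F x" by (simp add: sum)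
    then have "E x + E (F x) + (F (E x) + F x) = E x + F x"
      by (simp add: e.add f.add proj_idem[OF E] proj_idem[OF F])
    then show ?thesis by (simp add: algebra_simps)
  qed
  have 1: "E (F h) + E (F (E h)) = 0"
    using arg_cong[OF star[of h], of E] by (simp add: e.add proj_idem[OF E])
  have 2: "E (F (E h)) + F (E h) = 0"
    using star[of "E h"] by (simp add: proj_idem[OF E])
  have "E (F h) = F (E h)" using 1 2 by (simp add: eq_neg_iff_add_eq_0[symmetric] add_eq_0_iff)
  with star[of h] have "E (F h) + E (F h) = 0" by simp
  then have "(2::real) *\<^sub>R E (F h) = 0" by (simp add: scaleR_2)
  then show ?thesis by simp
qed

lemma pvm_proj: "is_pvm L P \<Longrightarrow> E \<in> borel_paths L \<Longrightarrow> is_proj (P E)"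
  unfolding is_pvm_def by blast

lemma pvm_empty: "is_pvm L P \<Longrightarrow> P {} h = 0"
  unfolding is_pvm_def by simp

lemma pvm_sums:
  "is_pvm L P \<Longrightarrow> range A \<subseteq> borel_paths L \<Longrightarrow> disjoint_family A \<Longrightarrow>
    (\<lambda>i. P (A i) h) sums P (\<Union>i. A i) h"
  unfolding is_pvm_def by blast

lemma empty_borel: "{} \<in> borel_paths L"
proof -
  interpret sigma_algebra "infpaths L" "borel_paths L" by (rule borel_sa)
  show ?thesis by simp
qed

lemma borel_Un: "A \<in> borel_paths L \<Longrightarrow> B \<in> borel_paths L \<Longrightarrow> A \<union> B \<in> borel_paths L"
proof -
  interpret sigma_algebra "infpaths L" "borel_paths L" by (rule borel_sa)
  show "A \<in> borel_paths L \<Longrightarrow> B \<in> borel_paths L \<Longrightarrow> A \<union> B \<in> borel_paths L" by blast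
qed

lemma pvm_union:
  assumes pvm: "is_pvm L P" and A: "A \<in> borel_paths L" and B: "B \<in> borel_paths L"
    and dj: "A \<inter> B = {}"
  shows "P (A \<union> B) h = P A h + P B h"
proof -
  define F where "F i = (if i = 0 then A else if i = Suc 0 then B else {})" for i :: nat
  have "range F \<subseteq> borel_paths L" using A B empty_borel by (auto simp: F_def)
  moreover have "disjoint_family F" using dj unfolding disjoint_family_on_def F_def by auto
  ultimately have s: "(\<lambda>i. P (F i) h) sums P (\<Union>i. F i) h" by (rule pvm_sums[OF pvm])
  have u: "(\<Union>i. F i) = A \<union> B" unfolding F_def by (auto split: if_splits)
  have "(\<lambda>i. P (F i) h) sums (\<Sum>i\<in>{0, Suc 0}. P (F i) h)"
    by (rule sums_finite) (auto simp: F_def pvm_empty[OF pvm])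
  then have "P (A \<union> B) h = (\<Sum>i\<in>{0, Suc 0}. P (F i) h)" using s u sums_unique2 by metis
  then show ?thesis by (simp add: F_def)
qed

lemma borel_Diff: "A \<in> borel_paths L \<Longrightarrow> B \<in> borel_paths L \<Longrightarrow> A - B \<in> borel_paths L"
proof -
  interpret sigma_algebra "infpaths L" "borel_paths L" by (rule borel_sa)
  show "A \<in> borel_paths L \<Longrightarrow> B \<in> borel_paths L \<Longrightarrow> A - B \<in> borel_paths L" by blast
qed

lemma pvm_disj:
  assumes pvm: "is_pvm L P" and A: "A \<in> borel_paths L" and B: "B \<in> borel_paths L"
    and dj: "A \<inter> B = {}"
  shows "P A (P B h) = 0"
proof -
  have p: "is_proj (P A)" "is_proj (P B)" "is_proj (P (A \<union> B))"
    using pvm_proj[OF pvm] A B borel_Un[OF A B] by auto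
  show ?thesis by (rule proj_orth[OF p]) (rule pvm_union[OF pvm A B dj])
qed

lemma pvm_mono:
  assumes pvm: "is_pvm L P" and A: "A \<in> borel_paths L" and B: "B \<in> borel_paths L"
    and sub: "B \<subseteq> A"
  shows "P A (P B h) = P B h"
proof -
  have AB: "A = B \<union> (A - B)" using sub by blast
  have "P A (P B h) = P B (P B h) + P (A - B) (P B h)"
    using pvm_union[OF pvm B borel_Diff[OF A B], of "P B h"] AB by simp
  also have "\<dots> = P B h"
    using proj_idem[OF pvm_proj[OF pvm B]] pvm_disj[OF pvm borel_Diff[OF A B] B] by auto
  finally show ?thesis .
qed

lemma pvm_zero_mono:
  assumes pvm: "is_pvm L P" and A: "A \<in> borel_paths L" and B: "B \<in> borel_paths L"
    and sub: "B \<subseteq> A" and z: "P A = (\<lambda>_. 0)"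
  shows "P B = (\<lambda>_. 0)"
proof
  fix h show "P B h = 0" using pvm_mono[OF pvm A B sub, of h] z by simp
qed

lemma pvm_cont_above:
  assumes pvm: "is_pvm L P" and C: "\<And>n. C n \<in> borel_paths L"
    and dec: "\<And>n. C (Suc n) \<subseteq> C n"
  shows "(\<lambda>n. P (C n) h) \<longlonglongrightarrow> P (\<Inter>n. C n) h"
proof -
  define D where "D j = C j - C (Suc j)" for j
  define S where "S = (\<Inter>n. C n)"
  have Db: "D j \<in> borel_paths L" for j unfolding D_def using C by (rule borel_Diff) (rule C)
  have Sb: "S \<in> borel_paths L" unfolding S_def using C
    by (intro sigma_algebra.countable_INT[OF borel_sa]) auto
  have ds: "decseq C" using dec by (rule decseq_SucI)
  have step: "P (C n) h = P (D n) h + P (C (Suc n)) h" for n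
  proof -
    have "C n = D n \<union> C (Suc n)" "D n \<inter> C (Suc n) = {}" using dec[of n] unfolding D_def by auto
    then show ?thesis using pvm_union[OF pvm Db C] by metis
  qed
  have fin: "P (C n) h = P (C 0) h - (\<Sum>j<n. P (D j) h)" for n
  proof (induction n)
    case (Suc n)
    have "P (C (Suc n)) h = P (C n) h - P (D n) h" using step[of n] by (simp add: algebra_simps)
    then show ?case using Suc.IH by (simp add: diff_diff_eq)
  qed simp
  define F where "F i = (if i = 0 then S else D (i - 1))" for i
  have "range F \<subseteq> borel_paths L" using Sb Db by (auto simp: F_def)
  moreover have "disjoint_family F"
  proof -
    have "D i \<inter> D j = {}" if "i < j" for i j
    proof -
      have "C j \<subseteq> C (Suc i)" using ds that unfolding decseq_def by auto
      then show ?thesis unfolding D_def by blast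
    qed
    moreover have "S \<inter> D j = {}" for j unfolding S_def D_def by blast
    moreover have D': "D i \<inter> D j = {}" if "i \<noteq> j" for i j
      using calculation(1) that by (metis linorder_neqE_nat Int_commute)
    ultimately have "F i \<inter> F j = {}" if "i \<noteq> j" for i j
      using that unfolding F_def
      by (cases i; cases j) (auto simp: Int_commute)
    then show ?thesis unfolding disjoint_family_on_def by blast
  qed
  ultimately have s: "(\<lambda>i. P (F i) h) sums P (\<Union>i. F i) h" by (rule pvm_sums[OF pvm])
  have u: "(\<Union>i. F i) = C 0"
  proof
    show "(\<Union>i. F i) \<subseteq> C 0"
    proof -
      have "D j \<subseteq> C 0" for j using ds unfolding D_def decseq_def by blast
      then show ?thesis unfolding F_def S_def by auto
    qed
    show "C 0 \<subseteq> (\<Union>i. F i)"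
    proof
      fix y assume y: "y \<in> C 0"
      show "y \<in> (\<Union>i. F i)"
      proof (cases "y \<in> S")
        case True then show ?thesis by (auto simp: F_def intro!: exI[of _ 0])
      next
        case False
        then obtain n where "y \<notin> C n" unfolding S_def by blast
        have "\<exists>j<n. y \<in> D j" if "y \<notin> C n" for n
          using that
        proof (induction n)
          case 0 then show ?case using y by simp
        next
          case (Suc n)
          show ?case
          proof (cases "y \<in> C n")
            case True then show ?thesis using Suc.prems unfolding D_def by auto
          next
            case False then show ?thesis using Suc.IH less_SucI by blast
          qed
        qed
        then obtain j where "y \<in> D j" using \<open>y \<notin> C n\<close> by blast
        then have "y \<in> F (Suc j)" by (simp add: F_def)
        then show ?thesis by blast
      qed
    qed
  qed
  have "(\<lambda>i. P (F (Suc i)) h) sums (P (C 0) h - P (F 0) h)"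
    using sums_Suc_iff[of "\<lambda>i. P (F i) h" "P (C 0) h - P (F 0) h"] s u by simp
  then have sD: "(\<lambda>j. P (D j) h) sums (P (C 0) h - P S h)" by (simp add: F_def)
  have "(\<lambda>n. P (C 0) h - (\<Sum>j<n. P (D j) h)) \<longlonglongrightarrow> P (C 0) h - (P (C 0) h - P S h)"
    using sD unfolding sums_def by (intro tendsto_diff tendsto_const)
  moreover have "(\<lambda>n. P (C n) h) = (\<lambda>n. P (C 0) h - (\<Sum>j<n. P (D j) h))"
    by (rule ext) (rule fin)
  ultimately show ?thesis unfolding S_def by simp
qed



lemma pvm_cyl_lim:
  assumes kg: "is_kgraph L" and pvm: "is_pvm L P" and x: "x \<in> infpaths L"
  shows "(\<lambda>n. P (cyl L (x (0, (\<lambda>_. n) + c))) h) \<longlonglongrightarrow> P {x} h"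
proof -
  have "(\<lambda>n. P (cyl L (x (0, (\<lambda>_. n) + c))) h) \<longlonglongrightarrow> P (\<Inter>n. cyl L (x (0, (\<lambda>_. n) + c))) h"
  proof (rule pvm_cont_above[OF pvm])
    show "cyl L (x (0, (\<lambda>_. n) + c)) \<in> borel_paths L" for n by (rule cyl_path_borel[OF x])
    show "cyl L (x (0, (\<lambda>_. Suc n) + c)) \<subseteq> cyl L (x (0, (\<lambda>_. n) + c))" for n
      by (rule cyl_dec[OF kg x]) (simp add: le_fun_def)
  qed
  then show ?thesis using cyl_Inter[OF kg x, of c] by metis
qed

lemma ck_facts:
  assumes ck: "ck_rep L t"
  shows "\<And>l. l \<in> Mor L \<Longrightarrow> bounded_clinear (t l)"
    and "\<And>l e y. l \<in> Mor L \<Longrightarrow> e \<in> Mor L \<Longrightarrow> sr L l = rg L e \<Longrightarrow> t l (t e y) = t (cmp L l e) y"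
    and "\<And>l y. l \<in> Mor L \<Longrightarrow> adj (t l) (t l y) = t (sr L l) y"
proof -
  note d = ck[unfolded ck_rep_def]
  have a: "\<forall>l\<in>Mor L. bounded_clinear (t l)" using d by (rule conjunct1)
  have b: "\<forall>l\<in>Mor L. \<forall>e\<in>Mor L. sr L l = rg L e \<longrightarrow> t l \<circ> t e = t (cmp L l e)"
    using d by (elim conjE)
  have c: "\<forall>l\<in>Mor L. adj (t l) \<circ> t l = t (sr L l)"
    using d by (elim conjE)
  show "\<And>l. l \<in> Mor L \<Longrightarrow> bounded_clinear (t l)" using a by blast
  show "t l (t e y) = t (cmp L l e) y" if "l \<in> Mor L" "e \<in> Mor L" "sr L l = rg L e" for l e y
  proof -
    have "t l \<circ> t e = t (cmp L l e)" using b that by blast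
    then show ?thesis by (simp add: fun_eq_iff)
  qed
  show "adj (t l) (t l y) = t (sr L l) y" if "l \<in> Mor L" for l y
  proof -
    have "adj (t l) \<circ> t l = t (sr L l)" using c that by blast
    then show ?thesis by (simp add: fun_eq_iff)
  qed
qed

lemma rep_facts:
  assumes "rep_pvm L t P"
  shows "is_pvm L P" and "\<And>l y. l \<in> Mor L \<Longrightarrow> P (cyl L l) y = t l (adj (t l) y)"
proof -
  show "is_pvm L P" using assms unfolding rep_pvm_def by blast
  show "P (cyl L l) y = t l (adj (t l) y)" if "l \<in> Mor L" for l y
  proof -
    have "P (cyl L l) = t l \<circ> adj (t l)" using assms that unfolding rep_pvm_def by blast
    then show ?thesis by simp
  qed
qed

lemma core:
  assumes kg: "is_kgraph L" and ck: "ck_rep L t" and rp: "rep_pvm L t P"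
    and x: "x \<in> infpaths L"
  shows "P {x} = (\<lambda>_. 0) \<longleftrightarrow> P {shift m x} = (\<lambda>_. 0)"
proof -
  have pvm: "is_pvm L P" by (rule rep_facts(1)[OF rp])
  define z where "z = shift m x"
  have z: "z \<in> infpaths L" unfolding z_def by (rule shift_infpaths[OF x])
  define lam where "lam = x (0, m)"
  define S where "S = adj (t lam)"
  define v where "v = x (m, m)"
  define C where "C n = cyl L (x (0, (\<lambda>_. n) + m))" for n
  define C' where "C' n = cyl L (z (0, (\<lambda>_. n) + 0))" for n
  have le0: "0 \<le> m" "\<And>q::'b \<Rightarrow> nat. m \<le> q + m" by (simp_all add: le_fun_def)
  have lam: "lam \<in> Mor L" "sr L lam = v" using ip_fact(1)[OF x le0(1)] by (auto simp: lam_def v_def)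
  have v: "v \<in> Mor L" "rg L v = v" "sr L v = v" using kg_fact(2)[OF kg lam(1)] lam(2) by auto
  have tl: "bounded_linear (t lam)" by (rule bcl_linear[OF ck_facts(1)[OF ck lam(1)]])
  have tv: "bounded_linear (t v)" by (rule bcl_linear[OF ck_facts(1)[OF ck v(1)]])
  have Cb: "C n \<in> borel_paths L" for n unfolding C_def by (rule cyl_path_borel[OF x])
  have C'b: "C' n \<in> borel_paths L" for n unfolding C'_def by (rule cyl_path_borel[OF z])
  have xb: "{x} \<in> borel_paths L" by (rule singleton_borel[OF kg x])
  have zb: "{z} \<in> borel_paths L" by (rule singleton_borel[OF kg z])
  have xC: "{x} \<subseteq> C n" for n unfolding C_def using cyl_path[OF x] x by auto
  have zC: "{z} \<subseteq> C' n" for n unfolding C'_def using cyl_path[OF z] z by auto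
  have limx: "(\<lambda>n. P (C n) h) \<longlonglongrightarrow> P {x} h" for h
    unfolding C_def by (rule pvm_cyl_lim[OF kg pvm x])
  have limz: "(\<lambda>n. P (C' n) h) \<longlonglongrightarrow> P {z} h" for h
    unfolding C'_def by (rule pvm_cyl_lim[OF kg pvm z])
  have F: "P (C n) y = t lam (P (C' n) (S (P (C n) y))) \<and>
           P (C n) (t lam (P (C' n) y)) = t lam (P (C' n) y)" for n y
  proof -
    define q where "q = (\<lambda>_::'b. n)"
    define mu where "mu = x (m, q + m)"
    define lmu where "lmu = x (0, q + m)"
    have Ceq: "C n = cyl L lmu" unfolding C_def lmu_def q_def by simp
    have C'eq: "C' n = cyl L mu" unfolding C'_def mu_def q_def z_def shift_def by (simp add: add.commute)
    have mu: "mu \<in> Mor L" "rg L mu = v" "sr L mu = x (q + m, q + m)"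
      using ip_fact(1)[OF x le0(2)[of q]] by (auto simp: mu_def v_def)
    have lmu: "lmu \<in> Mor L" "sr L lmu = x (q + m, q + m)"
      using ip_fact(1)[OF x, of 0 "q + m"] by (auto simp: lmu_def le_fun_def)
    have cmp: "cmp L lam mu = lmu" unfolding lam_def mu_def lmu_def
      by (rule ip_fact(3)[OF x le0(1) le0(2)])
    have smu: "sr L mu \<in> Mor L" "cmp L mu (sr L mu) = mu" "rg L (sr L mu) = sr L mu"
      using kg_fact(2)[OF kg mu(1)] by auto
    have e1: "t lam (t mu w) = t lmu w" for w using ck_facts(2)[OF ck lam(1) mu(1)] lam(2) mu(2) cmp by simp
    have e2: "S (t lam w) = t v w" for w using ck_facts(3)[OF ck lam(1)] lam(2) by (simp add: S_def)
    have e3: "t v (t mu w) = t mu w" for w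
      using ck_facts(2)[OF ck v(1) mu(1)] v mu(2) kg_fact(2)[OF kg mu(1)] by simp
    have e4: "adj (t mu) (t mu w) = t (sr L mu) w" for w using ck_facts(3)[OF ck mu(1)] .
    have e5: "t mu (t (sr L mu) w) = t mu w" for w
      using ck_facts(2)[OF ck mu(1) smu(1)] smu by simp
    have e7: "adj (t lmu) (t lmu w) = t (sr L mu) w" for w using ck_facts(3)[OF ck lmu(1)] lmu(2) mu(3) by simp
    have e8: "t lmu (t (sr L mu) w) = t lmu w" for w
      using ck_facts(2)[OF ck lmu(1) smu(1)] smu lmu(2) mu(3) kg_fact(2)[OF kg lmu(1)] by simp
    have P1: "P (C n) w = t lmu (adj (t lmu) w)" for w using rep_facts(2)[OF rp lmu(1)] Ceq by simp
    have P2: "P (C' n) w = t mu (adj (t mu) w)" for w using rep_facts(2)[OF rp mu(1)] C'eq by simp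
    have "S (P (C n) y) = t mu (adj (t lmu) y)" unfolding P1 e1[symmetric] e2 e3 ..
    then have 1: "t lam (P (C' n) (S (P (C n) y))) = P (C n) y"
      unfolding P2 by (simp add: e4 e5 e1 P1)
    have 2: "P (C n) (t lam (P (C' n) y)) = t lam (P (C' n) y)"
      unfolding P2 P1 e1 e7 e8 ..
    show ?thesis using 1 2 by simp
  qed
  have "P {x} = (\<lambda>_. 0) \<longleftrightarrow> P {z} = (\<lambda>_. 0)"
  proof
    assume Pz: "P {z} = (\<lambda>_. 0)"
    show "P {x} = (\<lambda>_. 0)"
    proof
      fix h
      define w0 where "w0 = P {x} h"
      have eq: "P {x} h = t lam (P (C' n) (S w0))" for n
      proof -
        have "P (C n) w0 = w0" unfolding w0_def by (rule pvm_mono[OF pvm Cb xb xC])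
        then show ?thesis using F[of n w0] unfolding w0_def by metis
      qed
      have "(\<lambda>n. t lam (P (C' n) (S w0))) \<longlonglongrightarrow> t lam (P {z} (S w0))"
        by (rule bounded_linear.tendsto[OF tl limz])
      then have "(\<lambda>n. P {x} h) \<longlonglongrightarrow> 0"
        unfolding eq[symmetric] Pz using linear_0[OF bounded_linear.linear[OF tl]] by simp
      then show "P {x} h = 0" using LIMSEQ_const_iff by blast
    qed
  next
    assume Px: "P {x} = (\<lambda>_. 0)"
    show "P {z} = (\<lambda>_. 0)"
    proof
      fix h
      define w0 where "w0 = P {z} h"
      have eq: "t lam w0 = P (C n) (t lam w0)" for n
      proof -
        have "P (C' n) w0 = w0" unfolding w0_def by (rule pvm_mono[OF pvm C'b zb zC])
        then show ?thesis using F[of n w0] by metis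
      qed
      have "(\<lambda>n. P (C n) (t lam w0)) \<longlonglongrightarrow> P {x} (t lam w0)" by (rule limx)
      then have "(\<lambda>n. t lam w0) \<longlonglongrightarrow> 0" unfolding eq[symmetric] Px .
      then have tw: "t lam w0 = 0" using LIMSEQ_const_iff by blast
      have "(\<lambda>_. 0) + m = m" by (simp add: fun_eq_iff)
      then have c0: "C' 0 = cyl L v" unfolding C'_def z_def shift_def v_def by simp
      have "w0 = P (C' 0) w0" unfolding w0_def by (rule pvm_mono[OF pvm C'b zb zC, symmetric])
      also have "\<dots> = t v (adj (t v) w0)" using rep_facts(2)[OF rp v(1)] c0 by simp
      also have "\<dots> = t v (t v (adj (t v) w0))"
        using ck_facts(2)[OF ck v(1) v(1)] v kg_fact(2)[OF kg v(1)] by simp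
      also have "\<dots> = t v w0"
        using ck_facts(2)[OF ck v(1) v(1)] v kg_fact(2)[OF kg v(1)] rep_facts(2)[OF rp v(1)] c0
        by (metis calculation)
      also have "\<dots> = S (t lam w0)" using ck_facts(3)[OF ck lam(1)] lam(2) by (simp add: S_def)
      also have "\<dots> = S (t lam 0)" using tw linear_0[OF bounded_linear.linear[OF tl]] by simp
      also have "\<dots> = t v 0" using ck_facts(3)[OF ck lam(1)] lam(2) by (simp add: S_def)
      also have "\<dots> = 0" by (rule linear_0[OF bounded_linear.linear[OF tv]])
      finally show "P {z} h = 0" unfolding w0_def .
    qed
  qed
  then show ?thesis unfolding z_def .
qed

lemma pvm_finite_sum:
  assumes kg: "is_kgraph L" and pvm: "is_pvm L P" and fin: "finite Ob" and sub: "Ob \<subseteq> infpaths L"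
  shows "P Ob h = (\<Sum>g\<in>Ob. P {g} h)"
  using fin sub
proof (induction Ob rule: finite_induct)
  case empty then show ?case by (simp add: pvm_empty[OF pvm])
next
  case (insert a F)
  have a: "{a} \<in> borel_paths L" using insert.prems by (intro singleton_borel[OF kg]) auto
  have F: "F \<in> borel_paths L" using insert.prems insert.hyps(1)
    by (intro countable_borel[OF kg]) (auto intro: countable_finite)
  have "P (insert a F) h = P ({a} \<union> F) h" by simp
  also have "\<dots> = P {a} h + P F h" using pvm_union[OF pvm a F] insert.hyps(2) by simp
  finally show ?case using insert by simp
qed

lemma pvm_countable_has_sum:
  assumes kg: "is_kgraph L" and pvm: "is_pvm L P" and cO: "countable Ob" and sub: "Ob \<subseteq> infpaths L"
    and sm: "(\<lambda>g. P {g} h) summable_on Ob"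
  shows "((\<lambda>g. P {g} h) has_sum P Ob h) Ob"
proof (cases "finite Ob")
  case True
  then show ?thesis using pvm_finite_sum[OF kg pvm True sub] has_sum_finite[OF True] by metis
next
  case False
  define e where "e = from_nat_into Ob"
  have bij: "bij_betw e UNIV Ob" unfolding e_def by (rule bij_betw_from_nat_into[OF cO False])
  obtain s where s: "((\<lambda>g. P {g} h) has_sum s) Ob" using sm unfolding summable_on_def by blast
  then have "((\<lambda>i. P {e i} h) has_sum s) UNIV" using has_sum_reindex_bij_betw[OF bij, of "\<lambda>g. P {g} h"] by simp
  then have s1: "(\<lambda>i. P {e i} h) sums s" by (rule has_sum_imp_sums)
  have "range (\<lambda>i. {e i}) \<subseteq> borel_paths L"
    using bij sub singleton_borel[OF kg] unfolding bij_betw_def by blast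
  moreover have "disjoint_family (\<lambda>i. {e i})"
    using bij unfolding bij_betw_def disjoint_family_on_def inj_on_def by auto
  ultimately have "(\<lambda>i. P {e i} h) sums P (\<Union>i. {e i}) h" by (rule pvm_sums[OF pvm])
  moreover have "(\<Union>i. {e i}) = Ob" using bij unfolding bij_betw_def by auto
  ultimately have "s = P Ob h" using s1 sums_unique2 by metis
  then show ?thesis using s by simp
qed

lemma top_borel: "infpaths L \<in> borel_paths L"
proof -
  interpret sigma_algebra "infpaths L" "borel_paths L" by (rule borel_sa)
  show ?thesis by (rule top)
qed

lemma partA:
  assumes kg: "is_kgraph L" and ck: "ck_rep L t" and rp: "rep_pvm L t P"
    and w: "w \<in> infpaths L" and g: "g \<in> infpaths L" and eq: "orbit L w = orbit L g"
  shows "P {w} = (\<lambda>_. 0) \<longleftrightarrow> P {g} = (\<lambda>_. 0)"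
proof -
  have "w \<in> orbit L g" using orbit_refl[OF w] eq by simp
  then obtain m l where "shift m w = shift l g" unfolding orbit_def by blast
  then show ?thesis using core[OF kg ck rp w, of m] core[OF kg ck rp g, of l] by simp
qed

theorem corollary3p4:
  fixes L :: "('a, 'k::finite) kgraph"
    and t :: "'a \<Rightarrow> 'h::chilbert_space \<Rightarrow> 'h"
    and P :: "('a, 'k) ipath set \<Rightarrow> 'h \<Rightarrow> 'h"
  assumes "is_kgraph L" and "row_finite L" and "no_sources L"
    and "ck_rep L t" and "rep_pvm L t P"
  shows "(\<forall>w\<in>infpaths L. \<forall>g\<in>infpaths L. orbit L w = orbit L g \<longrightarrow>
            (P {w} = (\<lambda>_. 0) \<longleftrightarrow> P {g} = (\<lambda>_. 0)))
       \<and> (purely_atomic L P \<longrightarrow>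
            (\<exists>R \<subseteq> pvm_supp L P.
               pvm_supp L P = (\<Union>w\<in>R. orbit L w) \<and>
               (\<forall>w\<in>R. \<forall>g\<in>R. w \<noteq> g \<longrightarrow> orbit L w \<inter> orbit L g = {}) \<and>
               (\<forall>w\<in>R. \<forall>g\<in>R. w \<noteq> g \<longrightarrow> P (orbit L w) \<circ> P (orbit L g) = (\<lambda>_. 0)) \<and>
               (\<forall>h. ((\<lambda>w. P (orbit L w) h) has_sum h) R)))"
proof (intro conjI impI)
  note kg = assms(1) and ck = assms(4) and rp = assms(5)
  have pvm: "is_pvm L P" by (rule rep_facts(1)[OF rp])
  show "\<forall>w\<in>infpaths L. \<forall>g\<in>infpaths L. orbit L w = orbit L g \<longrightarrow>
            (P {w} = (\<lambda>_. 0) \<longleftrightarrow> P {g} = (\<lambda>_. 0))"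
    using partA[OF kg ck rp] by blast
  assume pa: "purely_atomic L P"
  then obtain Om where Om: "Om \<in> borel_paths L" "P (infpaths L - Om) = (\<lambda>_. 0)"
    "\<And>w. w \<in> Om \<Longrightarrow> P {w} \<noteq> (\<lambda>_. 0)" "\<And>h. ((\<lambda>w. P {w} h) has_sum h) Om"
    unfolding purely_atomic_def by blast
  define supp where "supp = pvm_supp L P"
  have supp_eq: "supp = Om"
  proof
    show "Om \<subseteq> supp" using Om(3) borel_sub[OF Om(1)] unfolding supp_def pvm_supp_def by blast
    show "supp \<subseteq> Om"
    proof
      fix w assume w: "w \<in> supp"
      then have wi: "w \<in> infpaths L" and nz: "P {w} \<noteq> (\<lambda>_. 0)" unfolding supp_def pvm_supp_def by auto
      show "w \<in> Om"
      proof (rule ccontr)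
        assume "w \<notin> Om"
        then have "{w} \<subseteq> infpaths L - Om" using wi by blast
        then have "P {w} = (\<lambda>_. 0)"
          using pvm_zero_mono[OF pvm borel_Diff[OF _ Om(1)] singleton_borel[OF kg wi] _ Om(2)]
            top_borel by blast
        then show False using nz by simp
      qed
    qed
  qed
  have closed: "orbit L w \<subseteq> supp" if w: "w \<in> supp" for w
  proof
    fix g assume g: "g \<in> orbit L w"
    then obtain m l where gi: "g \<in> infpaths L" and e: "shift m g = shift l w" unfolding orbit_def by blast
    have wi: "w \<in> infpaths L" and nz: "P {w} \<noteq> (\<lambda>_. 0)" using w unfolding supp_def pvm_supp_def by auto
    have "P {g} \<noteq> (\<lambda>_. 0)" using core[OF kg ck rp gi, of m] core[OF kg ck rp wi, of l] e nz by simp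
    then show "g \<in> supp" using gi unfolding supp_def pvm_supp_def by blast
  qed
  have suppi: "supp \<subseteq> infpaths L" unfolding supp_def pvm_supp_def by blast
  define rep where "rep C = (SOME g. g \<in> C)" for C :: "('a, 'k) ipath set"
  have rep: "rep (orbit L w) \<in> orbit L w" "orbit L (rep (orbit L w)) = orbit L w" if "w \<in> supp" for w
  proof -
    have wi: "w \<in> infpaths L" using that suppi by blast
    show r: "rep (orbit L w) \<in> orbit L w" unfolding rep_def by (rule someI[where P="\<lambda>g. g \<in> orbit L w", OF orbit_refl[OF wi]])
    show "orbit L (rep (orbit L w)) = orbit L w" by (rule orbit_eq[OF r wi])
  qed
  define R where "R = rep ` (orbit L ` supp)"
  have Rsub: "R \<subseteq> supp" unfolding R_def using rep closed by blast
  have union: "supp = (\<Union>w\<in>R. orbit L w)"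
  proof
    show "supp \<subseteq> (\<Union>w\<in>R. orbit L w)"
    proof
      fix w assume w: "w \<in> supp"
      then have "rep (orbit L w) \<in> R" unfolding R_def by blast
      moreover have "w \<in> orbit L (rep (orbit L w))" using rep(2)[OF w] orbit_refl w suppi by auto
      ultimately show "w \<in> (\<Union>w\<in>R. orbit L w)" by blast
    qed
    show "(\<Union>w\<in>R. orbit L w) \<subseteq> supp" using Rsub closed by blast
  qed
  have disj: "orbit L w \<inter> orbit L g = {}" if wR: "w \<in> R" and gR: "g \<in> R" and ne: "w \<noteq> g" for w g
  proof (rule ccontr)
    assume "orbit L w \<inter> orbit L g \<noteq> {}"
    then obtain u where u: "u \<in> orbit L w" "u \<in> orbit L g" by blast
    obtain w0 where w0: "w0 \<in> supp" "w = rep (orbit L w0)" using wR unfolding R_def by blast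
    obtain g0 where g0: "g0 \<in> supp" "g = rep (orbit L g0)" using gR unfolding R_def by blast
    have wi: "w \<in> infpaths L" "g \<in> infpaths L" using wR gR Rsub suppi by auto
    have "orbit L w = orbit L g" using orbit_eq[OF u(1) wi(1)] orbit_eq[OF u(2) wi(2)] by simp
    then have "orbit L w0 = orbit L g0" using rep(2)[OF w0(1)] rep(2)[OF g0(1)] w0(2) g0(2) by simp
    then have "w = g" using w0(2) g0(2) by simp
    then show False using ne by simp
  qed
  have orb_borel: "orbit L w \<in> borel_paths L" for w
    by (rule countable_borel[OF kg orbit_countable[OF kg] orbit_sub])
  show "\<exists>R \<subseteq> pvm_supp L P.
               pvm_supp L P = (\<Union>w\<in>R. orbit L w) \<and>
               (\<forall>w\<in>R. \<forall>g\<in>R. w \<noteq> g \<longrightarrow> orbit L w \<inter> orbit L g = {}) \<and>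
               (\<forall>w\<in>R. \<forall>g\<in>R. w \<noteq> g \<longrightarrow> P (orbit L w) \<circ> P (orbit L g) = (\<lambda>_. 0)) \<and>
               (\<forall>h. ((\<lambda>w. P (orbit L w) h) has_sum h) R)"
  proof (intro exI[of _ R] conjI ballI impI allI)
    show "R \<subseteq> pvm_supp L P" using Rsub unfolding supp_def .
    show "pvm_supp L P = (\<Union>w\<in>R. orbit L w)" using union unfolding supp_def .
    show "orbit L w \<inter> orbit L g = {}" if "w \<in> R" "g \<in> R" "w \<noteq> g" for w g
      using disj that by blast
    show "P (orbit L w) \<circ> P (orbit L g) = (\<lambda>_. 0)" if "w \<in> R" "g \<in> R" "w \<noteq> g" for w g
      using pvm_disj[OF pvm orb_borel orb_borel disj[OF that]] by (simp add: fun_eq_iff)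
    fix h
    let ?f = "\<lambda>g. P {g} h"
    have inj: "inj_on snd (Sigma R (orbit L))" using disj by (auto simp: inj_on_def)
    have img: "snd ` Sigma R (orbit L) = supp" unfolding union
      by (auto simp: image_iff)
    have "(?f has_sum h) (snd ` Sigma R (orbit L))" using Om(4) supp_eq img by simp
    then have outer: "((?f \<circ> snd) has_sum h) (Sigma R (orbit L))" using has_sum_reindex[OF inj] by blast
    have sm: "?f summable_on supp" using Om(4) supp_eq unfolding summable_on_def by blast
    have inner: "((\<lambda>g. (?f \<circ> snd) (w, g)) has_sum P (orbit L w) h) (orbit L w)" if "w \<in> R" for w
    proof -
      have "orbit L w \<subseteq> supp" using union that by blast
      then have "?f summable_on orbit L w" by (rule summable_on_subset_banach[OF sm])
      then show ?thesis
        using pvm_countable_has_sum[OF kg pvm orbit_countable[OF kg] orbit_sub] by simp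
    qed
    show "((\<lambda>w. P (orbit L w) h) has_sum h) R" 
      by (rule has_sum_SigmaD[where g="\<lambda>w. P (orbit L w) h", OF outer inner])
  qed
qed

end
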